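(* For all integers $a,b\ge1$, \[ 1+\frac{(2^a-1)(2^b-1)}{(2^{\gcd(a,b)}-1)\,2^{(a+b)/2}}>2^{(a+b)/2-\gcd(a,b)}. \] *)

theory Defs
  imports Complex_Main
begin

end

theory Submission
  imports Defs
begin

lemma key:
  fixes x y H :: real
  assumes x: "x \<ge> 1" and y: "y \<ge> 1" and H: "H \<ge> 2"
    and c: "(H = x^2 \<and> y > 1) \<or> (H = y^2 \<and> x > 1) \<or> (H \<le> x \<and> H \<le> y)"
  shows "x^2*y^2 - H*(x^2+y^2) + H + (H-1)*H*(x*y) > 0"
  using c
proof (elim disjE conjE)
  assume h: "H = x^2" "y > 1"
  have "x^2*y^2 - H*(x^2+y^2) + H + (H-1)*H*(x*y) = (H-1)*H*(x*y-1)"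
    using h by (simp add: algebra_simps power2_eq_square)
  moreover have "x*y > 1"
  proof -
    have "x*1 \<le> x*y" using h x by (intro mult_left_mono) auto
    moreover have "x > 1 \<or> x = 1" using x by auto
    ultimately show ?thesis using h by (auto intro: less_1_mult)
  qed
  ultimately show ?thesis using H by simp
next
  assume h: "H = y^2" "x > 1"
  have "x^2*y^2 - H*(x^2+y^2) + H + (H-1)*H*(x*y) = (H-1)*H*(x*y-1)"
    using h by (simp add: algebra_simps power2_eq_square)
  moreover have "x*y > 1"
  proof -
    have "1*y \<le> x*y" using h y by (intro mult_right_mono) auto
    moreover have "y > 1 \<or> y = 1" using y by auto
    ultimately show ?thesis using h by (auto intro: less_1_mult)
  qed
  ultimately show ?thesis using H by simp
next
  assume h: "H \<le> x" "H \<le> y"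
  have x2: "x \<ge> 2" "y \<ge> 2" using h H by auto
  have "H*x^2 \<le> y*x^2" using h by (simp add: mult_right_mono)
  moreover have "H*y^2 \<le> x*y^2" using h by (simp add: mult_right_mono)
  moreover have "1*1 \<le> (x-1)*(y-1)" using x2 by (intro mult_mono) auto
  then have "x*y - x - y \<ge> 0" by (simp add: algebra_simps)
  then have "x*y*(x*y-x-y) \<ge> 0" using x2 by simp
  moreover have "x^2*y^2 = x*y*(x*y-x-y) + y*x^2 + x*y^2" by algebra
  ultimately have A: "H*x^2 + H*y^2 \<le> x^2*y^2" by linarith
  have B: "(H-1)*H*(x*y) > 0" using H x2 by (intro mult_pos_pos) auto
  have "x^2*y^2 - H*(x^2+y^2) + H + (H-1)*H*(x*y) = (x^2*y^2 - (H*x^2 + H*y^2)) + H + ((H-1)*H*(x*y))"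
    by algebra
  then show ?thesis using A B H by linarith
qed

theorem lemma3:
  fixes a b :: nat
  assumes "a \<ge> 1" and "b \<ge> 1"
  shows "1 + ((2::real) ^ a - 1) * (2 ^ b - 1) / ((2 ^ gcd a b - 1) * 2 powr (real (a + b) / 2))
         > 2 powr (real (a + b) / 2 - real (gcd a b))"
proof -
  define g where "g = gcd a b"
  define x where "x = (2::real) powr (real a / 2)"
  define y where "y = (2::real) powr (real b / 2)"
  define H where "H = (2::real) ^ g"
  have g1: "g \<ge> 1" using assms by (simp add: g_def Suc_le_eq)
  have H2: "H \<ge> 2" unfolding H_def using g1
    by (metis power_increasing power_one_right one_le_numeral)
  have x1: "x \<ge> 1" unfolding x_def by (rule ge_one_powr_ge_zero) auto
  have y1: "y \<ge> 1" unfolding y_def by (rule ge_one_powr_ge_zero) auto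
  have xa: "x^2 = 2^a" unfolding x_def
    by (simp add: power2_eq_square flip: powr_add powr_realpow)
  have yb: "y^2 = 2^b" unfolding y_def
    by (simp add: power2_eq_square flip: powr_add powr_realpow)
  have S: "2 powr (real (a + b) / 2) = x*y"
  proof -
    have "real (a + b) / 2 = real a / 2 + real b / 2" by (simp add: add_divide_distrib)
    moreover have "x*y = 2 powr (real a/2 + real b/2)" unfolding x_def y_def by (rule powr_add[symmetric])
    ultimately show ?thesis by (simp add: add_divide_distrib)
  qed
  have T: "2 powr (real (a + b) / 2 - real g) = x*y/H"
    unfolding H_def by (simp only: powr_diff S powr_realpow[symmetric])
  have xgt: "x > 1" if "a \<ge> 1" unfolding x_def using that by (intro gr_one_powr) auto
  have ygt: "y > 1" if "b \<ge> 1" unfolding y_def using that by (intro gr_one_powr) auto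
  have c: "(H = x^2 \<and> y > 1) \<or> (H = y^2 \<and> x > 1) \<or> (H \<le> x \<and> H \<le> y)"
  proof (cases "g = a \<or> g = b")
    case True then show ?thesis using assms xgt ygt xa yb H_def by auto
  next
    case False
    have "g dvd a" "g dvd b" by (auto simp: g_def)
    then obtain k l where k: "a = g*k" and l: "b = g*l" by (meson dvdE)
    have "k \<ge> 2" proof -
      have "k \<noteq> 0" "k \<noteq> 1" using k False assms by auto
      then show ?thesis by arith
    qed
    then have ga: "2*g \<le> a" using k by (metis mult.commute mult_le_mono2)
    have "l \<ge> 2" proof -
      have "l \<noteq> 0" "l \<noteq> 1" using l False assms by auto
      then show ?thesis by arith
    qed
    then have gb: "2*g \<le> b" using l by (metis mult.commute mult_le_mono2)
    have "H^2 \<le> x^2" unfolding xa H_def using ga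
      by (metis power_increasing power_mult mult.commute one_le_numeral)
    then have "H \<le> x" using x1 H2 by (simp add: power2_le_iff_abs_le)
    moreover have "H^2 \<le> y^2" unfolding yb H_def using gb
      by (metis power_increasing power_mult mult.commute one_le_numeral)
    then have "H \<le> y" using y1 H2 by (simp add: power2_le_iff_abs_le)
    ultimately show ?thesis by (simp add: add_divide_distrib)
  qed
  have K: "x^2*y^2 - H*(x^2+y^2) + H + (H-1)*H*(x*y) > 0" using key[OF x1 y1 H2 c] .
  have pos: "(H-1)*(x*y) > 0" "H > 0" using H2 x1 y1 by (auto intro!: mult_pos_pos)
  have "x*y/H < 1 + (x^2 - 1)*(y^2-1)/((H-1)*(x*y))"
    using K pos H2 x1 y1 by (simp add: field_simps power2_eq_square)
  then show ?thesis using S T xa yb by (simp add: g_def H_def)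
qed

end
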